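(* Let $g_0$ be a positive continuous function on $(0,\infty)$, $s>0$, and let $b_0$ be a smooth function on $(s,\infty)$ such that for every $h>0$ there is $C>0$ (resp. there are $h,C>0$) with $$|\partial^kb_0(\lambda)|\le Ch^kA_kg_0(\lambda)\langle\lambda\rangle^{-\rho k},\quad\lambda>s,\ k\in\mathbb N.$$ Then $b(x)=b_0(|x|)$ is smooth on $\{x\in\mathbb R^d:|x|>s\}$ and for every $h>0$ there is $C>0$ (resp. there are $h,C>0$) with $$|\partial^\alpha b(x)|\le Ch^{|\alpha|}A_\alpha g_0(|x|)\langle x\rangle^{-\rho|\alpha|},\quad |x|>s,\ \alpha\in\mathbb N^d.$$
   Context: $A_p$ is a sequence of positive numbers with $A_0=A_1=1$ satisfying (M.1) $A_p^2\le A_{p-1}A_{p+1}$, (M.2) $A_p\le c_0H^p\min_{q\le p}A_qA_{p-q}$, (M.3)' $\sum_{p\ge1}A_{p-1}/A_p<\infty$ and (M.4) $(A_p/p!)^2\le(A_{p-1}/(p-1)!)(A_{p+1}/(p+1)!)$; $A_\alpha=A_{|\alpha|}$. $\rho\in(0,1]$ is a fixed parameter (the paper's standing choice). "Beurling case" refers to the first quantifier pattern, "Roumieu case (resp.)" to the one in parentheses; the statement holds in each case. $\langle x\rangle=(1+|x|^2)^{1/2}$. *)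

theory Defs
  imports "HOL-Analysis.Analysis"
begin

definition jbr :: "'a::real_normed_vector \<Rightarrow> real" where
  "jbr x = sqrt (1 + (norm x)\<^sup>2)"

definition pd :: "'n::finite \<Rightarrow> (real^'n \<Rightarrow> real) \<Rightarrow> real^'n \<Rightarrow> real" where
  "pd i f x = deriv (\<lambda>t. f (x + t *\<^sub>R axis i 1)) 0"

text \<open>Iterated partial derivative along a list of coordinate directions;
  for a list with count i = alpha i this is \<partial>^alpha (for smooth functions
  the order is irrelevant), and |alpha| = length.\<close>
fun pdl :: "'n::finite list \<Rightarrow> (real^'n \<Rightarrow> real) \<Rightarrow> real^'n \<Rightarrow> real" where
  "pdl [] f = f"
| "pdl (i # is) f = pd i (pdl is f)"

definition Cinf_on :: "(real^'n::finite) set \<Rightarrow> (real^'n \<Rightarrow> real) \<Rightarrow> bool" where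
  "Cinf_on S f \<longleftrightarrow> (\<forall>is. continuous_on S (pdl is f) \<and>
     (\<forall>i. \<forall>x\<in>S. (\<lambda>t. pdl is f (x + t *\<^sub>R axis i 1)) differentiable (at 0)))"

definition Cinf_on1 :: "real set \<Rightarrow> (real \<Rightarrow> real) \<Rightarrow> bool" where
  "Cinf_on1 S f \<longleftrightarrow> (\<forall>k. \<forall>t\<in>S. (deriv ^^ k) f differentiable (at t))"

end

theory Submission
  imports Defs
begin

lemma inner_axis1: fixes x :: "real^'n" shows "axis i (1::real) \<bullet> x = x$i"
  using inner_axis'[of i "1::real" x] by simp

lemma sec_norm:
  fixes x :: "real^'n"
  assumes "x \<noteq> 0"
  shows "((\<lambda>t. norm (x + t *\<^sub>R axis i 1)) has_real_derivative (x$i / norm x)) (at 0)"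
proof -
  have d: "((\<lambda>t. x + t *\<^sub>R axis i 1) has_derivative (\<lambda>t. t *\<^sub>R axis i 1)) (at 0)"
    by (auto intro!: derivative_eq_intros)
  have "(norm has_derivative (\<lambda>h. h \<bullet> sgn x)) (at (x + 0 *\<^sub>R axis i 1))"
    using has_derivative_norm[OF assms] by simp
  from has_derivative_compose[OF d this]
  have "((\<lambda>t. norm (x + t *\<^sub>R axis i 1)) has_derivative (\<lambda>t. (t *\<^sub>R axis i (1::real)) \<bullet> sgn x)) (at 0)"
    by (simp add: o_def)
  moreover have "(\<lambda>t. (t *\<^sub>R axis i (1::real)) \<bullet> sgn x) = (*) (x$i / norm x)"
    by (rule ext) (simp add: inner_axis1 sgn_div_norm field_simps)
  ultimately show ?thesis
    unfolding has_field_derivative_def by simp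
qed

lemma DERIV_eq: "DERIV f x :> D \<Longrightarrow> D = E \<Longrightarrow> DERIV f x :> E" by simp

lemma sec_comp:
  fixes x :: "real^'n"
  shows "((\<lambda>t. (x + t *\<^sub>R axis i 1) $ l) has_real_derivative (if l = i then 1 else 0)) (at 0)"
  by (auto simp: axis_def intro!: derivative_eq_intros)

lemma sec_u:
  fixes x :: "real^'n"
  assumes "x \<noteq> 0"
  shows "((\<lambda>t. (x + t *\<^sub>R axis i 1) $ l / norm (x + t *\<^sub>R axis i 1)) has_real_derivative
           ((if l = i then 1 else 0) - x$l / norm x * (x$i / norm x)) * (1 / norm x)) (at 0)"
proof -
  have n0: "norm x \<noteq> 0" using assms by simp
  show ?thesis
    apply (rule DERIV_eq[OF DERIV_divide[OF sec_comp sec_norm[OF assms]]])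
    using n0 by (simp_all add: field_simps power2_eq_square)
qed

definition pu :: "real^'n \<Rightarrow> 'n list \<Rightarrow> real" where
  "pu x g = prod_list (map (\<lambda>l. x$l / norm x) g)"

fun du :: "'n \<Rightarrow> 'n list \<Rightarrow> (real \<times> 'n list) list" where
  "du i [] = []"
| "du i (l # g) = (if l = i then [(1, g)] else []) @ [(-1, i # l # g)] @ map (\<lambda>(c, g'). (c, l # g')) (du i g)"

definition sdu :: "real^'n \<Rightarrow> (real \<times> 'n list) list \<Rightarrow> real" where
  "sdu x L = sum_list (map (\<lambda>(c, g'). c * pu x g') L)"

lemma sdu_Nil[simp]: "sdu x [] = 0" by (simp add: sdu_def)
lemma sdu_Cons[simp]: "sdu x ((c,g) # L) = c * pu x g + sdu x L" by (simp add: sdu_def)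

lemma sdu_append[simp]: "sdu x (L1 @ L2) = sdu x L1 + sdu x L2"
  by (simp add: sdu_def)

lemma sdu_cons_map: "sdu x (map (\<lambda>(c, g'). (c, l # g')) L) = x$l / norm x * sdu x L"
  by (induct L) (auto simp: sdu_def pu_def algebra_simps)

lemma sec_pu:
  fixes x :: "real^'n"
  assumes "x \<noteq> 0"
  shows "((\<lambda>t. pu (x + t *\<^sub>R axis i 1) g) has_real_derivative (1 / norm x * sdu x (du i g))) (at 0)"
proof (induct g)
  case Nil
  then show ?case by (simp add: pu_def sdu_def)
next
  case (Cons l g)
  have e: "(\<lambda>t. pu (x + t *\<^sub>R axis i 1) (l # g)) =
     (\<lambda>t. (x + t *\<^sub>R axis i 1) $ l / norm (x + t *\<^sub>R axis i 1) * pu (x + t *\<^sub>R axis i 1) g)"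
    by (simp add: pu_def)
  have "((\<lambda>t. (x + t *\<^sub>R axis i 1) $ l / norm (x + t *\<^sub>R axis i 1) * pu (x + t *\<^sub>R axis i 1) g)
     has_real_derivative
     ((if l = i then 1 else 0) - x$l / norm x * (x$i / norm x)) * (1 / norm x) * pu (x + 0 *\<^sub>R axis i 1) g
      + 1 / norm x * sdu x (du i g) * ((x + 0 *\<^sub>R axis i 1) $ l / norm (x + 0 *\<^sub>R axis i 1))) (at 0)"
    by (rule DERIV_mult[OF sec_u[OF assms] Cons])
  moreover have "((if l = i then 1 else 0) - x$l / norm x * (x$i / norm x)) * (1 / norm x) * pu (x + 0 *\<^sub>R axis i 1) g
      + 1 / norm x * sdu x (du i g) * ((x + 0 *\<^sub>R axis i 1) $ l / norm (x + 0 *\<^sub>R axis i 1))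
      = 1 / norm x * sdu x (du i (l # g))"
    by (simp add: sdu_cons_map pu_def algebra_simps)
  ultimately show ?case using e by simp
qed

type_synonym 'n trm = "real \<times> nat \<times> 'n list \<times> nat"

definition evalt :: "(real \<Rightarrow> real) \<Rightarrow> real^'n \<Rightarrow> 'n trm \<Rightarrow> real" where
  "evalt b0 x tau = (case tau of (c, j, g, m) \<Rightarrow> c * (deriv ^^ j) b0 (norm x) * pu x g * (1 / norm x) ^ m)"

definition evalT :: "(real \<Rightarrow> real) \<Rightarrow> real^'n \<Rightarrow> 'n trm list \<Rightarrow> real" where
  "evalT b0 x T = sum_list (map (evalt b0 x) T)"

lemma evalT_Nil[simp]: "evalT b0 x [] = 0" by (simp add: evalT_def)
lemma evalT_Cons[simp]: "evalT b0 x (t # T) = evalt b0 x t + evalT b0 x T" by (simp add: evalT_def)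
lemma evalT_append[simp]: "evalT b0 x (T1 @ T2) = evalT b0 x T1 + evalT b0 x T2" by (simp add: evalT_def)
lemma evalT_concat: "evalT b0 x (concat TT) = sum_list (map (evalT b0 x) TT)"
  by (induct TT) auto

fun dterm :: "'n \<Rightarrow> 'n trm \<Rightarrow> 'n trm list" where
  "dterm i (c, j, g, m) = (c, Suc j, i # g, m) # (- (c * real m), j, i # g, Suc m)
     # map (\<lambda>(c', g'). (c * c', j, g', Suc m)) (du i g)"

lemma evalT_map_du: "evalT b0 x (map (\<lambda>(c', g'). (c * c', j, g', k)) L)
   = c * (deriv ^^ j) b0 (norm x) * (1 / norm x) ^ k * sdu x L"
  by (induct L) (auto simp: evalt_def algebra_simps)

lemma prod_rule4:
  fixes G P W :: "real \<Rightarrow> real"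
  assumes "DERIV G 0 :> g'" "DERIV P 0 :> p'" "DERIV W 0 :> w'"
  shows "DERIV (\<lambda>t. c * G t * P t * W t) 0 :> c * g' * P 0 * W 0 + c * G 0 * p' * W 0 + c * G 0 * P 0 * w'"
  apply (rule DERIV_eq)
   apply (rule DERIV_mult[OF DERIV_mult[OF DERIV_cmult[OF assms(1)] assms(2)] assms(3)])
  by (simp add: algebra_simps)

lemma sec_w:
  fixes x :: "real^'n"
  assumes "x \<noteq> 0"
  shows "DERIV (\<lambda>t. (1 / norm (x + t *\<^sub>R axis i 1)) ^ m) 0 :> - (real m * (x$i / norm x) * (1 / norm x) ^ Suc m)"
proof -
  have n0: "norm x \<noteq> 0" using assms by simp
  have d1: "DERIV (\<lambda>t. 1 / norm (x + t *\<^sub>R axis i 1)) 0 :> - ((x$i / norm x) * (1 / norm x)^2)"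
    apply (rule DERIV_eq[OF DERIV_divide[OF DERIV_const sec_norm[OF assms]]])
    using n0 by (simp_all add: field_simps power2_eq_square)
  show ?thesis
    apply (rule DERIV_eq[OF DERIV_power[OF d1]])
    using n0 by (cases m) (simp_all add: field_simps power2_eq_square)
qed

lemma sec_D:
  fixes x :: "real^'n"
  assumes "x \<noteq> 0" and "(deriv ^^ j) b0 differentiable (at (norm x))"
  shows "DERIV (\<lambda>t. (deriv ^^ j) b0 (norm (x + t *\<^sub>R axis i 1))) 0 :> (deriv ^^ Suc j) b0 (norm x) * (x$i / norm x)"
proof -
  have "DERIV ((deriv ^^ j) b0) (norm (x + 0 *\<^sub>R axis i 1)) :> (deriv ^^ Suc j) b0 (norm x)"
    using assms(2) by (simp add: DERIV_deriv_iff_real_differentiable)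
  from DERIV_chain2[OF this sec_norm[OF assms(1)]] show ?thesis .
qed

lemma sec_evalt:
  fixes x :: "real^'n"
  assumes "x \<noteq> 0" and "\<forall>k. (deriv ^^ k) b0 differentiable (at (norm x))"
  shows "DERIV (\<lambda>t. evalt b0 (x + t *\<^sub>R axis i 1) tau) 0 :> evalT b0 x (dterm i tau)"
proof -
  obtain c j g m where tau: "tau = (c, j, g, m)" by (cases tau) auto
  have "DERIV (\<lambda>t. c * (deriv ^^ j) b0 (norm (x + t *\<^sub>R axis i 1)) * pu (x + t *\<^sub>R axis i 1) g
         * (1 / norm (x + t *\<^sub>R axis i 1)) ^ m) 0 :> evalT b0 x (dterm i tau)"
    apply (rule DERIV_eq[OF prod_rule4[OF sec_D[OF assms(1)] sec_pu[OF assms(1)] sec_w[OF assms(1)]]])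
    using assms(2) apply simp
    using assms(1) apply (simp only: tau dterm.simps evalT_Cons evalT_Nil evalT_map_du)
    by (simp add: evalt_def pu_def algebra_simps)
  then show ?thesis by (simp add: tau evalt_def)
qed

lemma sec_evalT:
  fixes x :: "real^'n"
  assumes "x \<noteq> 0" and "\<forall>k. (deriv ^^ k) b0 differentiable (at (norm x))"
  shows "DERIV (\<lambda>t. evalT b0 (x + t *\<^sub>R axis i 1) T) 0 :> evalT b0 x (concat (map (dterm i) T))"
proof (induct T)
  case Nil
  then show ?case by simp
next
  case (Cons tau T)
  show ?case using DERIV_add[OF sec_evalt[OF assms] Cons] by simp
qed


fun TT :: "'n list \<Rightarrow> 'n trm list" where
  "TT [] = [(1, 0, [], 0)]"
| "TT (i # js) = concat (map (dterm i) (TT js))"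

lemma ev_sec:
  fixes x :: "real^'n"
  assumes "norm x > s"
  shows "eventually (\<lambda>t. s < norm (x + t *\<^sub>R axis i 1)) (nhds 0)"
proof -
  have "open {t::real. s < norm (x + t *\<^sub>R axis i 1)}"
    by (intro open_Collect_less continuous_intros)
  then show ?thesis
    using eventually_nhds_in_open[of "{t::real. s < norm (x + t *\<^sub>R axis i 1)}" 0] assms
    by simp
qed

lemma diff_all:
  assumes s: "s > 0" and b: "Cinf_on1 {s<..} b0" and x: "norm x > s"
  shows "x \<noteq> 0" "\<forall>k. (deriv ^^ k) b0 differentiable (at (norm x))"
  using s x b by (auto simp: Cinf_on1_def)

lemma rep:
  fixes js :: "('n::finite) list"
  assumes s: "s > 0" and b: "Cinf_on1 {s<..} b0"
  shows "\<forall>x::real^'n. norm x > s \<longrightarrow> pdl js (\<lambda>x. b0 (norm x)) x = evalT b0 x (TT js)"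
proof (induct js)
  case Nil
  then show ?case by (simp add: evalt_def pu_def)
next
  case (Cons i js)
  show ?case
  proof (intro allI impI)
    fix x :: "real^'n" assume x: "norm x > s"
    have ev: "eventually (\<lambda>t. pdl js (\<lambda>x. b0 (norm x)) (x + t *\<^sub>R axis i 1)
               = evalT b0 (x + t *\<^sub>R axis i 1) (TT js)) (nhds 0)"
      using ev_sec[OF x, of i] Cons by (auto elim: eventually_mono)
    have "DERIV (\<lambda>t. pdl js (\<lambda>x. b0 (norm x)) (x + t *\<^sub>R axis i 1)) 0 :> evalT b0 x (TT (i # js))"
      using DERIV_cong_ev[OF refl ev refl] sec_evalT[OF diff_all[OF s b x]] by simp
    then show "pdl (i # js) (\<lambda>x. b0 (norm x)) x = evalT b0 x (TT (i # js))"
      by (simp add: pd_def DERIV_imp_deriv)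
  qed
qed

lemma isCont_pu: "x \<noteq> 0 \<Longrightarrow> isCont (\<lambda>x. pu x g) (x::real^'n)"
  by (induct g) (auto simp: pu_def intro!: continuous_intros)

lemma isCont_evalT:
  fixes x :: "real^'n"
  assumes "x \<noteq> 0" and d: "\<forall>k. (deriv ^^ k) b0 differentiable (at (norm x))"
  shows "isCont (\<lambda>x. evalT b0 x T) x"
proof (induct T)
  case Nil
  then show ?case by simp
next
  case (Cons tau T)
  obtain c j g m where tau: "tau = (c, j, g, m)" by (cases tau) auto
  have "isCont ((deriv ^^ j) b0) (norm x)"
    using d DERIV_isCont real_differentiable_def by blast
  then have D: "isCont (\<lambda>x. (deriv ^^ j) b0 (norm x)) x"
    by (rule isCont_o2[rotated]) (intro continuous_intros)
  have "isCont (\<lambda>x. evalt b0 x tau) x"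
    unfolding tau evalt_def using assms(1)
    by (auto intro!: continuous_intros D isCont_pu)
  then show ?case using Cons by (simp add: isCont_add)
qed

lemma smooth:
  assumes s: "s > 0" and b: "Cinf_on1 {s<..} b0"
  shows "Cinf_on {x::real^'n. norm x > s} (\<lambda>x. b0 (norm x))"
  unfolding Cinf_on_def
proof (intro allI conjI ballI)
  fix "is" :: "('n::finite) list"
  have "continuous_on {x::real^'n. norm x > s} (\<lambda>x. evalT b0 x (TT is))"
    by (intro continuous_at_imp_continuous_on ballI isCont_evalT) (use diff_all[OF s b] in auto)
  then show "continuous_on {x::real^'n. norm x > s} (pdl is (\<lambda>x. b0 (norm x)))"
    by (rule continuous_on_cong[THEN iffD1, rotated 2]) (use rep[OF s b, of "is"] in auto)
next
  fix "is" :: "('n::finite) list" and i and x :: "real^'n"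
  assume "x \<in> {x::real^'n. norm x > s}"
  then have x: "norm x > s" by simp
  have ev: "eventually (\<lambda>t. pdl is (\<lambda>x. b0 (norm x)) (x + t *\<^sub>R axis i 1)
               = evalT b0 (x + t *\<^sub>R axis i 1) (TT is)) (nhds 0)"
    using ev_sec[OF x, of i] rep[OF s b, of "is"] by (auto elim: eventually_mono)
  have "DERIV (\<lambda>t. pdl is (\<lambda>x. b0 (norm x)) (x + t *\<^sub>R axis i 1)) 0 :> evalT b0 x (TT (i # is))"
    using DERIV_cong_ev[OF refl ev refl] sec_evalT[OF diff_all[OF s b x]] by simp
  then show "(\<lambda>t. pdl is (\<lambda>x. b0 (norm x)) (x + t *\<^sub>R axis i 1)) differentiable at 0"
    using real_differentiable_def by blast
qed


lemma du_len: "\<forall>(c, g') \<in> set (du i g). length g' \<le> Suc (length g)"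
  by (induct g) auto

lemma du_coef: "sum_list (map (\<lambda>(c, g'). \<bar>c\<bar>) (du i g)) \<le> 2 * real (length g)"
proof (induct g)
  case Nil
  then show ?case by simp
next
  case (Cons l g)
  have "sum_list (map (\<lambda>(c, g'). \<bar>c\<bar>) (map (\<lambda>(c, g'). (c, l # g')) L))
      = sum_list (map (\<lambda>(c, g'). \<bar>c\<bar>) L)" for L :: "(real \<times> 'a list) list"
    by (induct L) auto
  then show ?case using Cons by auto
qed

lemma TT_inv: "\<forall>(c, j, g, m) \<in> set (TT js). j + m = length js \<and> length g \<le> length js"
proof (induct js)
  case Nil
  then show ?case by simp
next
  case (Cons i js)
  show ?case
  proof (intro ballI)
    fix tau' assume "tau' \<in> set (TT (i # js))"
    then obtain tau where t: "tau \<in> set (TT js)" and in2: "tau' \<in> set (dterm i tau)" by auto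
    obtain c0 j0 g0 m0 where tau: "tau = (c0, j0, g0, m0)" by (cases tau) auto
    obtain c j g m where tau': "tau' = (c, j, g, m)" by (cases tau') auto
    have h: "j0 + m0 = length js" "length g0 \<le> length js" using Cons t tau by auto
    have "j + m = Suc (length js) \<and> length g \<le> Suc (length js)"
      using in2 h du_len[of i g0] unfolding tau tau' by auto
    then show "case tau' of (c, j, g, m) \<Rightarrow> j + m = length (i # js) \<and> length g \<le> length (i # js)"
      by (simp add: tau')
  qed
qed

lemma sum_list_map_concat: "sum_list (map f (concat xss)) = sum_list (map (\<lambda>xs. sum_list (map f xs)) xss)"
  by (induct xss) auto

definition wt :: "(nat \<Rightarrow> real) \<Rightarrow> 'n trm \<Rightarrow> real" where
  "wt F tau = (case tau of (c, j, g, m) \<Rightarrow> \<bar>c\<bar> * F j)"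

lemma wt_map_du: "sum_list (map (wt F) (map (\<lambda>(c', g'). (c * c', j, g', k)) L))
   = \<bar>c\<bar> * F j * sum_list (map (\<lambda>(c', g'). \<bar>c'\<bar>) L)"
  by (induct L) (auto simp: wt_def abs_mult algebra_simps)

lemma dterm_bound:
  assumes F: "\<forall>j. F j \<ge> 0" and "j + m = n" "length g \<le> n"
  shows "sum_list (map (wt F) (dterm i (c, j, g, m))) \<le> \<bar>c\<bar> * (F (Suc j) + 3 * real n * F j)"
proof -
  have 1: "sum_list (map (\<lambda>(c, g'). \<bar>c\<bar>) (du i g)) \<le> 2 * real n"
    using du_coef[of i g] assms(3) by linarith
  have "sum_list (map (wt F) (dterm i (c, j, g, m)))
     = \<bar>c\<bar> * F (Suc j) + \<bar>c\<bar> * real m * F j + \<bar>c\<bar> * F j * sum_list (map (\<lambda>(c, g'). \<bar>c\<bar>) (du i g))"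
    apply (simp only: dterm.simps list.map sum_list.Cons wt_map_du)
    by (simp add: wt_def abs_mult)
  also have "\<dots> \<le> \<bar>c\<bar> * F (Suc j) + \<bar>c\<bar> * real n * F j + \<bar>c\<bar> * F j * (2 * real n)"
    apply (intro add_mono mult_left_mono mult_right_mono order_refl 1)
    using assms by auto
  also have "\<dots> = \<bar>c\<bar> * (F (Suc j) + 3 * real n * F j)" by (simp add: algebra_simps)
  finally show ?thesis .
qed

definition kap :: "nat \<Rightarrow> nat \<Rightarrow> real" where
  "kap n j = 4 ^ n * fact n / fact j"

lemma kap_Suc: "real (Suc j) * kap n (Suc j) = kap n j"
  by (simp add: kap_def fact_Suc del: of_nat_Suc)

lemma kap_step:
  assumes F: "\<forall>j. F j \<ge> 0"
  shows "(\<Sum>j\<le>n. kap n j * (F (Suc j) + 3 * real n * F j)) \<le> (\<Sum>j\<le>Suc n. kap (Suc n) j * F j)"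
proof -
  have e1: "(\<Sum>j\<le>n. kap n j * F (Suc j)) = (\<Sum>j\<le>Suc n. real j * kap n j * F j)"
    by (subst sum.atMost_Suc_shift) (simp add: kap_Suc del: of_nat_Suc)
  have e2: "(\<Sum>j\<le>n. kap n j * (3 * real n * F j)) \<le> (\<Sum>j\<le>Suc n. kap n j * (3 * real n * F j))"
    using F by (simp add: kap_def)
  have e3: "(\<Sum>j\<le>Suc n. real j * kap n j * F j + kap n j * (3 * real n * F j)) \<le> (\<Sum>j\<le>Suc n. kap (Suc n) j * F j)"
  proof (rule sum_mono)
    fix j assume "j \<in> {..Suc n}"
    then have j: "real j + 3 * real n \<le> 4 * real (Suc n)" by simp
    have "real j * kap n j * F j + kap n j * (3 * real n * F j) = (real j + 3 * real n) * (kap n j * F j)"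
      by (simp add: algebra_simps)
    also have "\<dots> \<le> (4 * real (Suc n)) * (kap n j * F j)"
      by (rule mult_right_mono[OF j]) (use F in \<open>simp add: kap_def\<close>)
    also have "\<dots> = kap (Suc n) j * F j" by (simp add: kap_def)
    finally show "real j * kap n j * F j + kap n j * (3 * real n * F j) \<le> kap (Suc n) j * F j" .
  qed
  have "(\<Sum>j\<le>n. kap n j * (F (Suc j) + 3 * real n * F j))
     = (\<Sum>j\<le>n. kap n j * F (Suc j)) + (\<Sum>j\<le>n. kap n j * (3 * real n * F j))"
    by (simp add: algebra_simps sum.distrib)
  also have "\<dots> \<le> (\<Sum>j\<le>Suc n. real j * kap n j * F j) + (\<Sum>j\<le>Suc n. kap n j * (3 * real n * F j))"
    using e1 e2 by linarith
  also have "\<dots> = (\<Sum>j\<le>Suc n. real j * kap n j * F j + kap n j * (3 * real n * F j))"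
    by (simp add: sum.distrib)
  also have "\<dots> \<le> (\<Sum>j\<le>Suc n. kap (Suc n) j * F j)" by (rule e3)
  finally show ?thesis .
qed

lemma TT_bound:
  "\<forall>F. (\<forall>j. F j \<ge> 0) \<longrightarrow> sum_list (map (wt F) (TT js)) \<le> (\<Sum>j\<le>length js. kap (length js) j * F j)"
proof (induct js)
  case Nil
  then show ?case by (simp add: wt_def kap_def)
next
  case (Cons i js)
  show ?case
  proof (intro allI impI)
    fix F :: "nat \<Rightarrow> real" assume F: "\<forall>j. F j \<ge> 0"
    define n where "n = length js"
    define G where "G j = F (Suc j) + 3 * real n * F j" for j
    have G: "\<forall>j. G j \<ge> 0" using F by (simp add: G_def)
    have "sum_list (map (wt F) (TT (i # js))) = sum_list (map (\<lambda>tau. sum_list (map (wt F) (dterm i tau))) (TT js))"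
      by (simp add: sum_list_map_concat o_def)
    also have "\<dots> \<le> sum_list (map (wt G) (TT js))"
    proof (rule sum_list_mono)
      fix tau assume t: "tau \<in> set (TT js)"
      obtain c j g m where tau: "tau = (c, j, g, m)" by (cases tau) auto
      have "j + m = n" "length g \<le> n" using TT_inv[of js] t tau n_def by auto
      from dterm_bound[OF F this, of i c]
      show "sum_list (map (wt F) (dterm i tau)) \<le> wt G tau"
        by (simp add: tau wt_def G_def)
    qed
    also have "\<dots> \<le> (\<Sum>j\<le>n. kap n j * G j)" using Cons G n_def by auto
    also have "\<dots> \<le> (\<Sum>j\<le>Suc n. kap (Suc n) j * F j)"
      unfolding G_def by (rule kap_step[OF F])
    finally show "sum_list (map (wt F) (TT (i # js))) \<le> (\<Sum>j\<le>length (i # js). kap (length (i # js)) j * F j)"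
      by (simp add: n_def)
  qed
qed


lemma pu_le1: "x \<noteq> 0 \<Longrightarrow> \<bar>pu x g\<bar> \<le> 1"
proof (induct g)
  case Nil
  then show ?case by (simp add: pu_def)
next
  case (Cons l g)
  have "\<bar>x$l / norm x\<bar> \<le> 1"
  proof -
    have "norm x > 0" using Cons.prems by simp
    then show ?thesis using component_le_norm_cart[of x l] by (simp add: abs_div)
  qed
  then have "\<bar>x$l / norm x\<bar> * \<bar>pu x g\<bar> \<le> 1 * 1"
    using Cons by (intro mult_mono) auto
  then show ?case by (simp add: pu_def abs_mult)
qed

lemma pdl_bound:
  fixes x :: "real^'n" and js :: "'n list"
  assumes s: "s > 0" and b: "Cinf_on1 {s<..} b0" and x: "norm x > s"
  shows "\<bar>pdl js (\<lambda>x. b0 (norm x)) x\<bar> \<le>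
     (\<Sum>j\<le>length js. kap (length js) j * (\<bar>(deriv ^^ j) b0 (norm x)\<bar> * (1 / norm x) ^ (length js - j)))"
proof -
  define n where "n = length js"
  define F where "F j = \<bar>(deriv ^^ j) b0 (norm x)\<bar> * (1 / norm x) ^ (n - j)" for j
  have x0: "x \<noteq> 0" "norm x > 0" using s x by auto
  have F: "\<forall>j. F j \<ge> 0" using x0 by (simp add: F_def)
  have "\<bar>pdl js (\<lambda>x. b0 (norm x)) x\<bar> = \<bar>evalT b0 x (TT js)\<bar>"
    using rep[OF s b, of js] x by simp
  also have "\<dots> \<le> sum_list (map (\<lambda>t. \<bar>evalt b0 x t\<bar>) (TT js))"
    unfolding evalT_def using sum_list_abs[of "map (evalt b0 x) (TT js)"] by (simp add: o_def)
  also have "\<dots> \<le> sum_list (map (wt F) (TT js))"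
  proof (rule sum_list_mono)
    fix tau assume t: "tau \<in> set (TT js)"
    obtain c j g m where tau: "tau = (c, j, g, m)" by (cases tau) auto
    have "j + m = n" using TT_inv[of js] t unfolding tau n_def by fastforce
    then have m: "m = n - j" by simp
    have "\<bar>evalt b0 x tau\<bar> = \<bar>c\<bar> * \<bar>(deriv ^^ j) b0 (norm x)\<bar> * \<bar>pu x g\<bar> * (1 / norm x) ^ m"
      using x0 by (simp add: tau evalt_def abs_mult power_abs)
    also have "\<dots> \<le> \<bar>c\<bar> * \<bar>(deriv ^^ j) b0 (norm x)\<bar> * 1 * (1 / norm x) ^ m"
    proof -
      have "\<bar>pu x g\<bar> \<le> 1" by (rule pu_le1[OF x0(1)])
      moreover have "0 \<le> \<bar>c\<bar> * \<bar>(deriv ^^ j) b0 (norm x)\<bar>" by simp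
      moreover have "0 \<le> (1 / norm x) ^ m" using x0 by simp
      ultimately show ?thesis by (metis mult_left_mono mult_right_mono mult_nonneg_nonneg)
    qed
    also have "\<dots> = wt F tau" by (simp add: wt_def tau F_def m)
    finally show "\<bar>evalt b0 x tau\<bar> \<le> wt F tau" .
  qed
  also have "\<dots> \<le> (\<Sum>j\<le>n. kap n j * F j)" unfolding n_def using TT_bound[of js] F by blast
  finally show ?thesis by (simp add: F_def n_def)
qed


lemma a_facts:
  fixes A :: "nat \<Rightarrow> real"
  assumes A_pos: "\<forall>p. A p > 0"
    and A01: "A 0 = 1" "A 1 = 1"
    and M4: "\<forall>p\<ge>1. (A p / fact p)\<^sup>2 \<le> (A (p - 1) / fact (p - 1)) * (A (p + 1) / fact (p + 1))"
  defines "a \<equiv> \<lambda>p. A p / fact p"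
  shows "\<forall>p. a p > 0" "incseq (\<lambda>p. a (Suc p) / a p)" "\<forall>p. a (Suc p) / a p \<ge> 1"
    "\<forall>p q. p \<le> q \<longrightarrow> a p \<le> a q"
proof -
  show ap: "\<forall>p. a p > 0" using A_pos by (simp add: a_def)
  have r: "a (Suc p) / a p \<le> a (Suc (Suc p)) / a (Suc p)" for p
  proof -
    have "(a (Suc p))\<^sup>2 \<le> a p * a (Suc (Suc p))"
      using M4[rule_format, of "Suc p"] by (simp add: a_def)
    have "a (Suc p) / a p = (a (Suc p))\<^sup>2 / (a p * a (Suc p))"
      using ap by (simp add: power2_eq_square)
    also have "\<dots> \<le> (a p * a (Suc (Suc p))) / (a p * a (Suc p))"
      by (rule divide_right_mono) (use \<open>(a (Suc p))\<^sup>2 \<le> _\<close> ap in \<open>auto intro: less_imp_le\<close>)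
    also have "\<dots> = a (Suc (Suc p)) / a (Suc p)"
      using ap[rule_format, of p] by simp
    finally show ?thesis .
  qed
  show inc: "incseq (\<lambda>p. a (Suc p) / a p)" by (rule incseq_SucI) (use r in simp)
  have r0: "a (Suc 0) / a 0 = 1" using A01 by (simp add: a_def)
  show ge1: "\<forall>p. a (Suc p) / a p \<ge> 1"
    using incseqD[OF inc, of 0] r0 by simp
  have "a p \<le> a (Suc p)" for p using ge1 ap by (auto simp: le_divide_eq)
  then show "\<forall>p q. p \<le> q \<longrightarrow> a p \<le> a q"
    using lift_Suc_mono_le[of a] by blast
qed


lemma beur:
  fixes a :: "nat \<Rightarrow> real" and M :: real
  assumes ap: "\<forall>p. a p > 0" and inc: "incseq (\<lambda>p. a (Suc p) / a p)"
    and mono_a: "\<forall>p q. p \<le> q \<longrightarrow> a p \<le> a q"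
    and summ: "summable (\<lambda>p. a p / (a (Suc p) * real (Suc p)))" and M: "M \<ge> 1"
  shows "\<exists>P. \<forall>j n. j \<le> n \<longrightarrow> a j * M ^ (n - j) \<le> M ^ P * a n"
proof -
  have "\<exists>P. \<forall>p\<ge>P. M * a p \<le> a (Suc p)"
  proof (rule ccontr)
    assume nP: "\<not> (\<exists>P. \<forall>p\<ge>P. M * a p \<le> a (Suc p))"
    have lt: "a (Suc q) < M * a q" for q
    proof -
      obtain p where p: "p \<ge> q" "a (Suc p) < M * a p" using nP by (auto simp: not_le)
      have "a (Suc p) / a p < M" using p(2) ap by (simp add: divide_less_eq)
      moreover have "a (Suc q) / a q \<le> a (Suc p) / a p" using incseqD[OF inc p(1)] .
      ultimately have "a (Suc q) / a q < M" by linarith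
      then show ?thesis using ap by (simp add: divide_less_eq)
    qed
    have cmp: "norm (1 / (M * real (Suc q))) \<le> a q / (a (Suc q) * real (Suc q))" for q
    proof -
      have "1 / M \<le> a q / a (Suc q)"
        using lt[of q] ap M by (simp add: divide_simps less_imp_le mult.commute)
      then have "1 / M / real (Suc q) \<le> a q / a (Suc q) / real (Suc q)"
        by (rule divide_right_mono) simp
      then show ?thesis using M by simp
    qed
    have "summable (\<lambda>q. 1 / (M * real (Suc q)))"
      by (rule summable_comparison_test'[OF summ]) (use cmp in auto)
    then have "summable (\<lambda>q. M * (1 / (M * real (Suc q))))" by (rule summable_mult)
    then have "summable (\<lambda>q. 1 / real (Suc q))" using M by simp
    then have "summable (\<lambda>q. 1 / real q)" using summable_Suc_iff[where f="\<lambda>n. 1 / (real n)"] by simp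
    then show False using not_summable_harmonic[where 'a=real] by (simp add: inverse_eq_divide)
  qed
  then obtain P where P: "\<forall>p\<ge>P. M * a p \<le> a (Suc p)" by blast
  have Mk: "1 \<le> M ^ k" for k using M by simp
  have claim: "j \<le> n \<Longrightarrow> a j * M ^ (n - j) \<le> M ^ (min n P) * a n" for j n
  proof (induct n)
    case 0
    then show ?case by simp
  next
    case (Suc n)
    show ?case
    proof (cases "j = Suc n")
      case True
      have "0 < a (Suc n)" using ap by simp
      then show ?thesis using Mk[of "min (Suc n) P"] True
        by (simp add: mult_le_cancel_right1)
    next
      case False
      then have jn: "j \<le> n" using Suc.prems by simp
      have IH: "a j * M ^ (n - j) \<le> M ^ (min n P) * a n" using Suc.hyps jn by simp
      have "a j * M ^ (Suc n - j) = M * (a j * M ^ (n - j))" using jn by (simp add: Suc_diff_le)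
      also have "\<dots> \<le> M * (M ^ (min n P) * a n)" using IH M by simp
      also have "\<dots> \<le> M ^ (min (Suc n) P) * a (Suc n)"
      proof (cases "n \<ge> P")
        case True
        then have "M * (M ^ (min n P) * a n) = M ^ P * (M * a n)" by (simp add: min_def)
        also have "\<dots> \<le> M ^ P * a (Suc n)" using P True M by simp
        finally show ?thesis using True by (simp add: min_def)
      next
        case False
        then have "M * (M ^ (min n P) * a n) = M ^ Suc n * a n" by (simp add: min_def)
        also have "\<dots> \<le> M ^ Suc n * a (Suc n)" using mono_a M by simp
        finally show ?thesis using False by (simp add: min_def)
      qed
      finally show ?thesis .
    qed
  qed
  show ?thesis
  proof (intro exI allI impI)
    fix j n :: nat assume "j \<le> n"
    then have "a j * M ^ (n - j) \<le> M ^ (min n P) * a n" by (rule claim)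
    also have "\<dots> \<le> M ^ P * a n"
      using ap M by (intro mult_right_mono power_increasing) (auto intro: less_imp_le)
    finally show "a j * M ^ (n - j) \<le> M ^ P * a n" .
  qed
qed


lemma jbr_real: "jbr (norm (x::'a::real_normed_vector)) = jbr x"
  by (simp add: jbr_def)

lemma jbr_ge1: "jbr (t::real) \<ge> 1"
  by (simp add: jbr_def)

lemma jbr_ratio:
  fixes r s :: real
  assumes "0 < s" "s < r"
  shows "1 / r \<le> (jbr s / s) * (1 / jbr r)"
proof -
  have r0: "r > 0" using assms by simp
  have J0: "jbr r > 0" using jbr_ge1[of r] by simp
  have "(1 + r\<^sup>2) * s\<^sup>2 \<le> (1 + s\<^sup>2) * r\<^sup>2"
  proof -
    have "s\<^sup>2 \<le> r\<^sup>2" using assms by (intro power_mono) auto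
    then show ?thesis by (simp add: algebra_simps)
  qed
  then have "sqrt ((1 + r\<^sup>2) * s\<^sup>2) \<le> sqrt ((1 + s\<^sup>2) * r\<^sup>2)" by (rule real_sqrt_le_mono)
  then have "jbr r * s \<le> jbr s * r"
    using assms r0 by (simp add: jbr_def real_sqrt_mult)
  then show ?thesis using assms r0 J0 by (simp add: divide_simps mult.commute)
qed

lemma pow_bound:
  fixes r s \<rho> :: real
  assumes "0 < s" "s < r" "0 < \<rho>" "\<rho> \<le> 1"
  shows "(1 / r) ^ k \<le> (jbr s / s) ^ k * jbr r powr (- \<rho> * real k)"
proof -
  have J1: "jbr r \<ge> 1" by (rule jbr_ge1)
  have "(1 / r) ^ k \<le> ((jbr s / s) * (1 / jbr r)) ^ k"
    by (rule power_mono[OF jbr_ratio[OF assms(1,2)]]) (use assms in simp)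
  also have "\<dots> = (jbr s / s) ^ k * jbr r powr (- real k)"
    using J1 by (simp add: power_mult_distrib powr_minus powr_realpow power_divide divide_inverse power_inverse)
  also have "\<dots> \<le> (jbr s / s) ^ k * jbr r powr (- \<rho> * real k)"
  proof (rule mult_left_mono)
    show "jbr r powr (- real k) \<le> jbr r powr (- \<rho> * real k)"
      by (rule powr_mono) (use assms J1 in \<open>auto simp: mult_left_le_one_le\<close>)
    show "0 \<le> (jbr s / s) ^ k" using assms jbr_ge1[of s] by simp
  qed
  finally show ?thesis .
qed


lemma final_core:
  fixes r s \<rho> C h h' D G :: real and A :: "nat \<Rightarrow> real" and Dj :: "nat \<Rightarrow> real"
  assumes s: "0 < s" "s < r" and rho: "0 < \<rho>" "\<rho> \<le> 1"
    and pos: "C > 0" "D > 0" "G > 0" "\<forall>p. A p > 0" "h' > 0" "h > 0"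
    and hyp: "\<forall>j. \<bar>Dj j\<bar> \<le> C * h ^ j * A j * G * jbr r powr (- \<rho> * real j)"
    and key: "\<forall>j\<le>n. 4 ^ n * h ^ j * (jbr s / s) ^ (n - j) * (A j / fact j) \<le> D * (h' / 2) ^ n * (A n / fact n)"
  shows "(\<Sum>j\<le>n. kap n j * (\<bar>Dj j\<bar> * (1 / r) ^ (n - j))) \<le> (C * D) * h' ^ n * A n * G * jbr r powr (- \<rho> * real n)"
proof -
  define J where "J = jbr r"
  define K where "K = jbr s / s"
  define Q where "Q = C * D * (h' / 2) ^ n * A n * G * J powr (- \<rho> * real n)"
  have J1: "J \<ge> 1" unfolding J_def by (rule jbr_ge1)
  have K0: "K \<ge> 0" unfolding K_def using s jbr_ge1[of s] by simp
  have tb: "kap n j * (\<bar>Dj j\<bar> * (1 / r) ^ (n - j)) \<le> Q" if j: "j \<le> n" for j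
  proof -
    have pb: "(1 / r) ^ (n - j) \<le> K ^ (n - j) * J powr (- \<rho> * real (n - j))"
      unfolding K_def J_def by (rule pow_bound[OF s rho])
    have kap0: "kap n j \<ge> 0" by (simp add: kap_def)
    have "kap n j * (\<bar>Dj j\<bar> * (1 / r) ^ (n - j))
        \<le> kap n j * ((C * h ^ j * A j * G * J powr (- \<rho> * real j)) * (K ^ (n - j) * J powr (- \<rho> * real (n - j))))"
      apply (intro mult_left_mono mult_mono kap0 pb)
      using hyp unfolding J_def apply blast
      using pos s by (auto simp add: less_imp_le)
    also have "\<dots> = C * G * (J powr (- \<rho> * real j) * J powr (- \<rho> * real (n - j))) * fact n
        * (4 ^ n * h ^ j * K ^ (n - j) * (A j / fact j))"
      by (simp add: kap_def)
    also have "J powr (- \<rho> * real j) * J powr (- \<rho> * real (n - j)) = J powr (- \<rho> * real n)"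
      using j J1 by (simp add: powr_add[symmetric] of_nat_diff algebra_simps)
    also have "C * G * J powr (- \<rho> * real n) * fact n * (4 ^ n * h ^ j * K ^ (n - j) * (A j / fact j))
        \<le> C * G * J powr (- \<rho> * real n) * fact n * (D * (h' / 2) ^ n * (A n / fact n))"
      apply (rule mult_left_mono)
      using key j unfolding K_def apply blast
      using pos by simp
    also have "\<dots> = Q" by (simp add: Q_def)
    finally show ?thesis .
  qed
  have "(\<Sum>j\<le>n. kap n j * (\<bar>Dj j\<bar> * (1 / r) ^ (n - j))) \<le> (\<Sum>j\<le>n. Q)"
    by (rule sum_mono) (use tb in simp)
  also have "\<dots> = real (Suc n) * Q" by simp
  also have "\<dots> \<le> 2 ^ n * Q"
  proof (rule mult_right_mono)
    have "Suc n \<le> 2 ^ n" by (induct n) auto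
    then show "real (Suc n) \<le> 2 ^ n" by (metis of_nat_le_iff of_nat_numeral of_nat_power)
    show "0 \<le> Q" unfolding Q_def using pos by (simp add: less_imp_le)
  qed
  also have "\<dots> = (C * D) * h' ^ n * A n * G * jbr r powr (- \<rho> * real n)"
    by (simp add: Q_def J_def power_divide)
  finally show ?thesis .
qed


lemma ident:
  fixes hp K :: real assumes "hp > 0"
  shows "4 ^ (j + k) * (hp / 8) ^ j * K ^ k = (hp / 2) ^ (j + k) * (8 * K / hp) ^ k"
proof -
  have e: "(hp / 2) ^ (j + k) * (8 * K / hp) ^ k = (hp/2)^j * ((hp / 2) * (8 * K / hp)) ^ k"
    by (simp only: power_add power_mult_distrib mult_ac)
  have e2: "((hp / 2) * (8 * K / hp)) ^ k = (4 * K) ^ k" using assms by simp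
  have e3: "(hp / 2) ^ j = 4 ^ j * (hp / 8) ^ j"
  proof -
    have "hp / 2 = 4 * (hp / 8)" by simp
    then show ?thesis by (simp only: power_mult_distrib)
  qed
  have "(hp / 2) ^ (j + k) * (8 * K / hp) ^ k = 4 ^ j * (hp / 8) ^ j * (4 * K) ^ k"
    using e e2 e3 by simp
  then show ?thesis by (simp add: power_add power_mult_distrib)
qed

theorem lemma5p9:
  fixes A :: "nat \<Rightarrow> real" and \<rho> s :: real
    and g0 b0 :: "real \<Rightarrow> real"
  assumes A_pos: "\<forall>p. A p > 0"
    and A01: "A 0 = 1" "A 1 = 1"
    and M1: "\<forall>p\<ge>1. (A p)\<^sup>2 \<le> A (p - 1) * A (p + 1)"
    and M2: "\<exists>c0 H. \<forall>p. \<forall>q\<le>p. A p \<le> c0 * H ^ p * (A q * A (p - q))"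
    and M3': "summable (\<lambda>p. A p / A (Suc p))"
    and M4: "\<forall>p\<ge>1. (A p / fact p)\<^sup>2 \<le> (A (p - 1) / fact (p - 1)) * (A (p + 1) / fact (p + 1))"
    and rho: "0 < \<rho>" "\<rho> \<le> 1"
    and g0_pos: "\<forall>t>0. g0 t > 0"
    and g0_cont: "continuous_on {0<..} g0"
    and s_pos: "s > 0"
    and b0_smooth: "Cinf_on1 {s<..} b0"
  shows
    "((\<forall>h>0. \<exists>C>0. \<forall>t>s. \<forall>k.
         \<bar>(deriv ^^ k) b0 t\<bar> \<le> C * h ^ k * A k * g0 t * jbr t powr (- \<rho> * real k))
      \<longrightarrow> Cinf_on {x::real^'n. norm x > s} (\<lambda>x. b0 (norm x))
        \<and> (\<forall>h>0. \<exists>C>0. \<forall>x::real^'n. norm x > s \<longrightarrow> (\<forall>js.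
              \<bar>pdl js (\<lambda>x. b0 (norm x)) x\<bar>
                \<le> C * h ^ length js * A (length js) * g0 (norm x)
                  * jbr x powr (- \<rho> * real (length js)))))
   \<and> ((\<exists>h>0. \<exists>C>0. \<forall>t>s. \<forall>k.
         \<bar>(deriv ^^ k) b0 t\<bar> \<le> C * h ^ k * A k * g0 t * jbr t powr (- \<rho> * real k))
      \<longrightarrow> Cinf_on {x::real^'n. norm x > s} (\<lambda>x. b0 (norm x))
        \<and> (\<exists>h>0. \<exists>C>0. \<forall>x::real^'n. norm x > s \<longrightarrow> (\<forall>js.
              \<bar>pdl js (\<lambda>x. b0 (norm x)) x\<bar>
                \<le> C * h ^ length js * A (length js) * g0 (norm x)
                  * jbr x powr (- \<rho> * real (length js)))))"
proof -
  have sm: "Cinf_on {x::real^'n. norm x > s} (\<lambda>x. b0 (norm x))"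
    by (rule smooth[OF s_pos b0_smooth])
  define a where "a = (\<lambda>p. A p / fact p)"
  have ap: "\<forall>p. a p > 0" and inc: "incseq (\<lambda>p. a (Suc p) / a p)"
    and mono_a: "\<forall>p q. p \<le> q \<longrightarrow> a p \<le> a q"
    using a_facts[OF A_pos A01 M4] unfolding a_def by blast+
  define K where "K = jbr s / s"
  have K1: "K \<ge> 1"
  proof -
    have "s \<le> jbr s" unfolding jbr_def
      by (rule real_le_rsqrt) simp
    then show ?thesis unfolding K_def using s_pos by simp
  qed
  have MB: "\<forall>x::real^'n. norm x > s \<longrightarrow> (\<forall>js.
              \<bar>pdl js (\<lambda>x. b0 (norm x)) x\<bar>
                \<le> (C * D) * h' ^ length js * A (length js) * g0 (norm x)
                  * jbr x powr (- \<rho> * real (length js)))"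
    if h: "h > 0" "C > 0" "D > 0" "h' > 0"
      and hyp: "\<forall>t>s. \<forall>k. \<bar>(deriv ^^ k) b0 t\<bar> \<le> C * h ^ k * A k * g0 t * jbr t powr (- \<rho> * real k)"
      and key: "\<forall>n j. j \<le> n \<longrightarrow> 4 ^ n * h ^ j * K ^ (n - j) * a j \<le> D * (h' / 2) ^ n * a n"
    for h C D h'
  proof (intro allI impI)
    fix x :: "real^'n" and js :: "'n list"
    assume x: "norm x > s"
    define n where "n = length js"
    have "\<bar>pdl js (\<lambda>x. b0 (norm x)) x\<bar> \<le>
       (\<Sum>j\<le>n. kap n j * (\<bar>(deriv ^^ j) b0 (norm x)\<bar> * (1 / norm x) ^ (n - j)))"
      unfolding n_def by (rule pdl_bound[OF s_pos b0_smooth x])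
    also have "\<dots> \<le> (C * D) * h' ^ n * A n * g0 (norm x) * jbr (norm x) powr (- \<rho> * real n)"
    proof (rule final_core[OF s_pos x rho h(2,3) _ A_pos h(4,1)])
      have "norm x > 0" using x s_pos by linarith
      then show "0 < g0 (norm x)" using g0_pos by simp
      show "\<forall>j. \<bar>(deriv ^^ j) b0 (norm x)\<bar> \<le> C * h ^ j * A j * g0 (norm x) * jbr (norm x) powr (- \<rho> * real j)"
        using hyp x by blast
      show "\<forall>j\<le>n. 4 ^ n * h ^ j * (jbr s / s) ^ (n - j) * (A j / fact j) \<le> D * (h' / 2) ^ n * (A n / fact n)"
        using key unfolding K_def a_def by blast
    qed
    finally show "\<bar>pdl js (\<lambda>x. b0 (norm x)) x\<bar>
                \<le> (C * D) * h' ^ length js * A (length js) * g0 (norm x)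
                  * jbr x powr (- \<rho> * real (length js))"
      by (simp add: n_def jbr_real)
  qed
  show ?thesis
  proof (intro conjI impI)
    show "Cinf_on {x::real^'n. norm x > s} (\<lambda>x. b0 (norm x))" by (rule sm)
    show "Cinf_on {x::real^'n. norm x > s} (\<lambda>x. b0 (norm x))" by (rule sm)
  next
    assume hypB: "\<forall>h>0. \<exists>C>0. \<forall>t>s. \<forall>k.
         \<bar>(deriv ^^ k) b0 t\<bar> \<le> C * h ^ k * A k * g0 t * jbr t powr (- \<rho> * real k)"
    show "\<forall>h>0. \<exists>C>0. \<forall>x::real^'n. norm x > s \<longrightarrow> (\<forall>js.
              \<bar>pdl js (\<lambda>x. b0 (norm x)) x\<bar>
                \<le> C * h ^ length js * A (length js) * g0 (norm x)
                  * jbr x powr (- \<rho> * real (length js)))"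
    proof (intro allI impI)
      fix hp :: real assume hp: "hp > 0"
      define M where "M = max 1 (8 * K / hp)"
      have M1': "M \<ge> 1" by (simp add: M_def)
      have summ: "summable (\<lambda>p. a p / (a (Suc p) * real (Suc p)))"
      proof -
        have "A p / A (Suc p) = a p / (a (Suc p) * real (Suc p))" for p
          using A_pos by (simp add: a_def fact_Suc divide_simps del: of_nat_Suc)
        then show ?thesis using M3' by simp
      qed
      obtain P where P: "\<forall>j n. j \<le> n \<longrightarrow> a j * M ^ (n - j) \<le> M ^ P * a n"
        using beur[OF ap inc mono_a summ M1'] by blast
      obtain C where C: "C > 0" "\<forall>t>s. \<forall>k.
         \<bar>(deriv ^^ k) b0 t\<bar> \<le> C * (hp / 8) ^ k * A k * g0 t * jbr t powr (- \<rho> * real k)"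
        using hypB hp by (metis divide_pos_pos zero_less_numeral)
      have key: "\<forall>n j. j \<le> n \<longrightarrow> 4 ^ n * (hp / 8) ^ j * K ^ (n - j) * a j \<le> M ^ P * (hp / 2) ^ n * a n"
      proof (intro allI impI)
        fix n j :: nat assume jn: "j \<le> n"
        then obtain k where nk: "n = j + k" using le_Suc_ex by blast
        have "4 ^ n * (hp / 8) ^ j * K ^ (n - j) * a j = (hp / 2) ^ n * ((8 * K / hp) ^ k * a j)"
          using ident[OF hp, of j k K] nk by simp
        also have "\<dots> \<le> (hp / 2) ^ n * (M ^ k * a j)"
          apply (intro mult_left_mono mult_right_mono power_mono)
          using hp K1 ap by (auto simp: M_def less_imp_le)
        also have "\<dots> \<le> (hp / 2) ^ n * (M ^ P * a n)"
          apply (rule mult_left_mono)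
          using P[rule_format, OF jn] nk hp apply (simp add: mult.commute)
          using hp by simp
        finally show "4 ^ n * (hp / 8) ^ j * K ^ (n - j) * a j \<le> M ^ P * (hp / 2) ^ n * a n"
          by (simp add: algebra_simps)
      qed
      have "M ^ P > 0" using M1' by simp
      from MB[OF _ C(1) this hp C(2) key] hp
      show "\<exists>C>0. \<forall>x::real^'n. norm x > s \<longrightarrow> (\<forall>js.
              \<bar>pdl js (\<lambda>x. b0 (norm x)) x\<bar>
                \<le> C * hp ^ length js * A (length js) * g0 (norm x)
                  * jbr x powr (- \<rho> * real (length js)))"
        using C(1) \<open>M ^ P > 0\<close> by (intro exI[of _ "C * M ^ P"]) simp
    qed
  next
    assume "\<exists>h>0. \<exists>C>0. \<forall>t>s. \<forall>k.
         \<bar>(deriv ^^ k) b0 t\<bar> \<le> C * h ^ k * A k * g0 t * jbr t powr (- \<rho> * real k)"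
    then obtain h C where h: "h > 0" "C > 0" and hyp: "\<forall>t>s. \<forall>k.
         \<bar>(deriv ^^ k) b0 t\<bar> \<le> C * h ^ k * A k * g0 t * jbr t powr (- \<rho> * real k)" by blast
    define H where "H = max h 1"
    define hp where "hp = 8 * H * K"
    have H1: "H \<ge> 1" by (simp add: H_def)
    have hp: "hp > 0" using H1 K1 by (simp add: hp_def)
    have key: "\<forall>n j. j \<le> n \<longrightarrow> 4 ^ n * h ^ j * K ^ (n - j) * a j \<le> 1 * (hp / 2) ^ n * a n"
    proof (intro allI impI)
      fix n j :: nat assume jn: "j \<le> n"
      have "h ^ j \<le> H ^ n"
      proof -
        have "h ^ j \<le> H ^ j" using h by (intro power_mono) (auto simp: H_def)
        also have "\<dots> \<le> H ^ n" using H1 jn by (rule power_increasing[rotated])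
        finally show ?thesis .
      qed
      moreover have "K ^ (n - j) \<le> K ^ n" using K1 by (intro power_increasing) auto
      moreover have "a j \<le> a n" using mono_a jn by blast
      ultimately have "4 ^ n * h ^ j * K ^ (n - j) * a j \<le> 4 ^ n * H ^ n * K ^ n * a n"
        using h K1 ap H1 by (intro mult_mono) (auto intro: less_imp_le)
      also have "\<dots> = 1 * (hp / 2) ^ n * a n"
        by (simp add: hp_def power_mult_distrib)
      finally show "4 ^ n * h ^ j * K ^ (n - j) * a j \<le> 1 * (hp / 2) ^ n * a n" .
    qed
    note X = MB[OF h(1,2) zero_less_one hp hyp key]
    show "\<exists>h>0. \<exists>C>0. \<forall>x::real^'n. norm x > s \<longrightarrow> (\<forall>js.
              \<bar>pdl js (\<lambda>x. b0 (norm x)) x\<bar>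
                \<le> C * h ^ length js * A (length js) * g0 (norm x)
                  * jbr x powr (- \<rho> * real (length js)))"
      apply (rule exI[of _ hp]) apply (rule conjI[OF hp]) apply (rule exI[of _ C])
      using X h(2) by simp
  qed
qed

end
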